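(* For any positive integer $n$ and any pair of non-negative integers $s,t$ with $s \geq t$, \[ \sum_{j=0}^{n} \frac{1}{\binom{n+s}{j+t}} \binom{n}{j} \;=\; \frac{s+1+n}{(s+1)\binom{s}{t}} . \] *)

theory Defs
  imports Complex_Main
begin

end

theory Submission
  imports Defs
begin

lemma conv:
  "(\<Sum>j\<le>n. ((j + a) choose j) * ((n - j + b) choose b)) = (n + a + b + 1) choose n"
proof (induction b arbitrary: n)
  case 0
  then show ?case using sum_choose_lower[of a n] by (simp add: add.commute)
next
  case (Suc b)
  note IHb = Suc.IH
  show ?case
  proof (induction n)
    case 0
    then show ?case by simp
  next
    case (Suc n)
    have split: "\<And>j. j \<le> Suc n \<Longrightarrow> (Suc n - j + Suc b) choose Suc b
        = ((Suc n - j + b) choose b) + ((Suc n - j + b) choose Suc b)"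
      by simp
    have "(\<Sum>j\<le>Suc n. ((j + a) choose j) * ((Suc n - j + Suc b) choose Suc b))
       = (\<Sum>j\<le>Suc n. ((j + a) choose j) * ((Suc n - j + b) choose b))
         + (\<Sum>j\<le>Suc n. ((j + a) choose j) * ((Suc n - j + b) choose Suc b))"
      by (simp add: split sum.distrib algebra_simps)
    also have "(\<Sum>j\<le>Suc n. ((j + a) choose j) * ((Suc n - j + b) choose b)) = (Suc n + a + b + 1) choose Suc n"
      using IHb .
    also have "(\<Sum>j\<le>Suc n. ((j + a) choose j) * ((Suc n - j + b) choose Suc b))
        = (\<Sum>j\<le>n. ((j + a) choose j) * ((n - j + Suc b) choose Suc b))"
      by (auto simp: Suc_diff_le intro!: sum.cong)
    also have "\<dots> = (n + a + Suc b + 1) choose n" using Suc.IH .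
    finally show ?case by simp
  qed
qed

lemma term_id:
  fixes j m t u :: nat
  shows "real ((j+m) choose j) * real ((t+u) choose t) * real ((j+m+t+u) choose (j+m))
    = real ((j+t) choose j) * real ((m+u) choose u) * real ((j+m+t+u) choose (j+t))"
proof -
  have a: "real ((x+y) choose x) = fact (x+y) / (fact x * fact y)" for x y :: nat
    using binomial_fact[of x "x+y", where 'a=real] by simp
  have b: "real ((x+y) choose y) = fact (x+y) / (fact x * fact y)" for x y :: nat
    using binomial_fact[of y "x+y", where 'a=real] by (simp add: mult.commute)
  have c: "real ((j+m+t+u) choose (j+m)) = fact (j+m+t+u) / (fact (j+m) * fact (t+u))"
    using binomial_fact[of "j+m" "j+m+t+u", where 'a=real] by (simp add: add.assoc)
  have d: "real ((j+m+t+u) choose (j+t)) = fact (j+m+t+u) / (fact (j+t) * fact (m+u))"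
    using binomial_fact[of "j+t" "j+m+t+u", where 'a=real]
    by (simp add: algebra_simps)
  show ?thesis unfolding a b c d by (simp add: field_simps)
qed

theorem lemma1:
  fixes n s t :: nat
  assumes "n \<ge> 1" and "s \<ge> t"
  shows "(\<Sum>j=0..n. (real (n choose j)) / real ((n + s) choose (j + t)))
           = real (s + 1 + n) / (real (s + 1) * real (s choose t))"
proof -
  define u where "u = s - t"
  have s: "s = t + u" using assms u_def by simp
  have pos1: "real ((n+s) choose n) > 0" by simp
  have pos2: "real (s choose t) > 0" using assms by simp
  have tm: "real (n choose j) / real ((n + s) choose (j + t))
      = real ((j+t) choose j) * real ((n-j+u) choose u) / (real ((n+s) choose n) * real (s choose t))"
    if "j \<in> {0..n}" for j
  proof -
    from that have nj: "n = j + (n-j)" by simp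
    have pos3: "real ((n + s) choose (j + t)) > 0" using that assms(2) by simp
    have "real ((j+(n-j)) choose j) * real ((t+u) choose t) * real ((j+(n-j)+t+u) choose (j+(n-j)))
      = real ((j+t) choose j) * real (((n-j)+u) choose u) * real ((j+(n-j)+t+u) choose (j+t))"
      by (rule term_id)
    then have "real (n choose j) * real (s choose t) * real ((n+s) choose n)
      = real ((j+t) choose j) * real (((n-j)+u) choose u) * real ((n+s) choose (j+t))"
      using nj s by (simp add: add.assoc)
    then show ?thesis using pos1 pos2 pos3 by (simp add: field_simps)
  qed
  have "(\<Sum>j=0..n. (real (n choose j)) / real ((n + s) choose (j + t)))
     = (\<Sum>j=0..n. real ((j+t) choose j) * real ((n-j+u) choose u)) / (real ((n+s) choose n) * real (s choose t))"
    by (simp add: tm sum_divide_distrib)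
  also have "(\<Sum>j=0..n. real ((j+t) choose j) * real ((n-j+u) choose u)) = real ((n+t+u+1) choose n)"
    using conv[where n=n and a=t and b=u] by (simp add: atLeast0AtMost flip: of_nat_mult of_nat_sum)
  also have "real ((n+t+u+1) choose n) * real (s+1) = real (s+1+n) * real ((n+s) choose n)"
  proof -
    have "(n+t+u+1) choose n = Suc (n+s) choose Suc s" using s
      by (metis add_Suc_right binomial_symmetric add.commute add.left_commute add_diff_cancel_left' le_add1 plus_1_eq_Suc)
    then have "((n+t+u+1) choose n) * Suc s = Suc (n+s) * ((n+s) choose s)"
      using Suc_times_binomial_eq[of "n+s" s] by (simp add: mult.commute)
    also have "(n+s) choose s = (n+s) choose n" by (metis add.commute binomial_symmetric le_add1 add_diff_cancel_left')
    finally have "((n+t+u+1) choose n) * (s+1) = (s+1+n) * ((n+s) choose n)" by (simp add: algebra_simps)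
    then show ?thesis by (metis of_nat_mult)
  qed
  then have "real ((n+t+u+1) choose n) = real (s+1+n) * real ((n+s) choose n) / real (s+1)"
    by (simp add: field_simps)
  finally have eq: "(\<Sum>j=0..n. (real (n choose j)) / real ((n + s) choose (j + t)))
     = real (s+1+n) * real ((n+s) choose n) / real (s+1) / (real ((n+s) choose n) * real (s choose t))" .
  show ?thesis unfolding eq using pos1 pos2
    by (simp del: of_nat_add of_nat_Suc)
qed

end
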